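(* Consider the \texttt{Ghost} algorithm described in the context and assume (A1), (A2), (A4). Then for all $k\ge1$, $$\mathbb{E}\big[\|w_k-\widehat w_k\|^2\,\big|\,\widehat w_{k-1}\big]\le\gamma^2\omega_{\mathrm{dwn}}\Big(1+\frac{\omega_{\mathrm{up}}}{N}\Big)\|\nabla F(\widehat w_{k-1})\|^2+\frac{\gamma^2\omega_{\mathrm{dwn}}(1+\omega_{\mathrm{up}})\sigma^2}{Nb}.$$
   Context: $N\ge1$ homogeneous workers, objective $F:\mathbb{R}^d\to\mathbb{R}$. Worker $i$ at iteration $k$ has an oracle $g_k^i$ (mini-batch $b$) with $\mathbb{E}[g_k^i(w)]=\nabla F(w)$; $\widehat g_k^i(w)=\mathcal{C}_{\mathrm{up}}(g_k^i(w))$ denotes its uplink-compressed version. All compressions and oracle calls use fresh independent randomness. \texttt{Ghost} algorithm with step size $\gamma$: $\widehat w_0=w_0$ and for $k\ge0$: $w_{k+1}=w_k-\gamma\frac1N\sum_{i=1}^N\widehat g_{k+1}^i(\widehat w_k)$ and $\widehat w_{k+1}=w_k-\gamma\,\mathcal{C}_{\mathrm{dwn}}\big(\frac1N\sum_{i=1}^N\widehat g^i_{k+1}(\widehat w_k)\big)$, where the vector $\frac1N\sum_i\widehat g^i_{k+1}(\widehat w_k)$ is the same in both lines. $\mathbb{E}[\cdot\mid\widehat w_{k-1}]$ is the conditional expectation given all randomness up to the computation of $\widehat w_{k-1}$. (A1) for some $\omega_{\mathrm{up}},\omega_{\mathrm{dwn}}>0$ and all $w$: $\mathbb{E}[\mathcal{C}_{\mathrm{up/dwn}}(w)]=w$,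 $\mathbb{E}\|\mathcal{C}_{\mathrm{up/dwn}}(w)-w\|^2\le\omega_{\mathrm{up/dwn}}\|w\|^2$. (A2) $F$ twice continuously differentiable and $L$-smooth. (A4) $\mathbb{E}\|g_k^i(w)-\nabla F(w)\|^2\le\sigma^2/b$ for all $k,i,w$. *)

theory Defs
  imports "HOL-Probability.Probability"
begin

text \<open>Distributions are Markov kernels on Borel sets:
  \<open>g k i w\<close> is the law of the oracle output g_k^i(w);
  \<open>Cup x\<close>, \<open>Cdwn x\<close> are the laws of the compressed vectors C_up(x), C_dwn(x).
  All randomness used in iteration k is fresh, hence independent of everything
  up to hat w_(k-1); conditioning on hat w_(k-1) therefore amounts to fixing
  its value w and integrating over the fresh randomness of iteration k.\<close>

definition unbiased_compressor :: "('a::euclidean_space \<Rightarrow> 'a measure) \<Rightarrow> real \<Rightarrow> bool" where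
  "unbiased_compressor C \<omega> \<longleftrightarrow>
     C \<in> borel \<rightarrow>\<^sub>M prob_algebra borel \<and>
     (\<forall>x. integrable (C x) (\<lambda>y. y) \<and> integral\<^sup>L (C x) (\<lambda>y. y) = x \<and>
          integrable (C x) (\<lambda>y. (norm (y - x))\<^sup>2) \<and>
          (\<integral>y. (norm (y - x))\<^sup>2 \<partial>C x) \<le> \<omega> * (norm x)\<^sup>2)"

definition avg :: "nat \<Rightarrow> (nat \<Rightarrow> 'a::euclidean_space) \<Rightarrow> 'a" where
  "avg N ys = (1 / real N) *\<^sub>R (\<Sum>i<N. ys i)"

definition uplink_law :: "nat \<Rightarrow> (nat \<Rightarrow> nat \<Rightarrow> 'a \<Rightarrow> 'a measure) \<Rightarrow> ('a \<Rightarrow> 'a measure)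
    \<Rightarrow> nat \<Rightarrow> 'a::euclidean_space \<Rightarrow> (nat \<Rightarrow> 'a) measure" where
  "uplink_law N g Cup k w = (\<Pi>\<^sub>M i\<in>{..<N}. (g k i w \<bind> Cup))"

text \<open>E[ ||w_k - hat w_k||^2 | hat w_(k-1) ] evaluated at hat w_(k-1) = w:
  w_k - hat w_k = gamma (C_dwn(v) - v) with v = (1/N) sum_i hat g_k^i(hat w_(k-1)).\<close>
definition ghost_cond_err :: "real \<Rightarrow> nat \<Rightarrow> (nat \<Rightarrow> nat \<Rightarrow> 'a \<Rightarrow> 'a measure) \<Rightarrow> ('a \<Rightarrow> 'a measure)
    \<Rightarrow> ('a \<Rightarrow> 'a measure) \<Rightarrow> nat \<Rightarrow> 'a::euclidean_space \<Rightarrow> real" where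
  "ghost_cond_err \<gamma> N g Cup Cdwn k w =
     (\<integral>ys. (\<integral>z. (norm (\<gamma> *\<^sub>R (z - avg N ys)))\<^sup>2 \<partial>Cdwn (avg N ys)) \<partial>uplink_law N g Cup k w)"

end

theory Submission
  imports Defs
begin


lemma integral_bind_nonneg:
  fixes h :: "'b \<Rightarrow> real"
  assumes h[measurable]: "h \<in> borel_measurable K"
  and hpos: "\<And>y. 0 \<le> h y"
  and N[measurable]: "N \<in> M \<rightarrow>\<^sub>M subprob_algebra K"
  and ne: "space M \<noteq> {}"
  and int: "integrable (M \<bind> N) h"
  shows "integrable M (\<lambda>x. integral\<^sup>L (N x) h)"
    and "integral\<^sup>L (M \<bind> N) h = (\<integral>x. integral\<^sup>L (N x) h \<partial>M)"
    and "AE x in M. integrable (N x) h"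
proof -
  have sN: "\<And>x. x \<in> space M \<Longrightarrow> sets (N x) = sets K"
    using N by (rule subprob_measurableD(2))
  have sB: "sets (M \<bind> N) = sets K" using sN ne by (rule sets_bind)
  have hB: "h \<in> borel_measurable (M \<bind> N)" using sB by (simp add: measurable_cong_sets[OF sB refl])
  have hN: "\<And>x. x \<in> space M \<Longrightarrow> h \<in> borel_measurable (N x)"
  proof -
    fix x assume "x \<in> space M"
    then have sx: "sets (N x) = sets K" by (rule sN)
    show "h \<in> borel_measurable (N x)" using h by (simp only: measurable_cong_sets[OF sx refl])
  qed
  have eqI: "\<And>x. x \<in> space M \<Longrightarrow> integral\<^sup>L (N x) h = enn2real (\<integral>\<^sup>+y. h y \<partial>N x)"
    using hN hpos by (intro integral_eq_nn_integral) auto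
  have mI[measurable]: "(\<lambda>x. \<integral>\<^sup>+y. h y \<partial>N x) \<in> borel_measurable M" by measurable
  have bindeq: "(\<integral>\<^sup>+y. h y \<partial>(M \<bind> N)) = (\<integral>\<^sup>+x. \<integral>\<^sup>+y. h y \<partial>N x \<partial>M)"
    by (rule nn_integral_bind[OF _ N]) measurable
  have fin: "(\<integral>\<^sup>+y. h y \<partial>(M \<bind> N)) < \<infinity>"
    using int hpos by (auto simp: integrable_iff_bounded)
  have AEfin: "AE x in M. (\<integral>\<^sup>+y. h y \<partial>N x) \<noteq> \<infinity>"
    using fin bindeq by (intro nn_integral_PInf_AE) auto
  have eq2: "(\<integral>\<^sup>+x. ennreal (integral\<^sup>L (N x) h) \<partial>M) = (\<integral>\<^sup>+x. \<integral>\<^sup>+y. h y \<partial>N x \<partial>M)"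
    using AEfin by (intro nn_integral_cong_AE) (auto simp: eqI less_top)
  have mI2: "(\<lambda>x. integral\<^sup>L (N x) h) \<in> borel_measurable M"
    by (subst measurable_cong[OF eqI]) auto
  show "integrable M (\<lambda>x. integral\<^sup>L (N x) h)"
    using mI2 eq2 bindeq fin by (intro integrableI_nonneg) (auto simp: eqI)
  show "integral\<^sup>L (M \<bind> N) h = (\<integral>x. integral\<^sup>L (N x) h \<partial>M)"
    using mI2 eq2 bindeq hB hpos
    by (subst (1 2) integral_eq_nn_integral) (auto simp: eqI)
  show "AE x in M. integrable (N x) h"
    using AEfin AE_space
  proof eventually_elim
    case (elim x)
    show ?case
    proof (rule integrableI_nonneg)
      show "h \<in> borel_measurable (N x)" using hN elim(2) by blast
      show "AE y in N x. 0 \<le> h y" using hpos by simp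
      show "(\<integral>\<^sup>+y. ennreal (h y) \<partial>N x) < \<infinity>" using elim(1) by (simp add: less_top)
    qed
  qed
qed

lemma integral_bind_real:
  fixes f :: "'b \<Rightarrow> real"
  assumes f[measurable]: "f \<in> borel_measurable K"
  and N[measurable]: "N \<in> M \<rightarrow>\<^sub>M subprob_algebra K"
  and ne: "space M \<noteq> {}"
  and int: "integrable (M \<bind> N) f"
  shows "integral\<^sup>L (M \<bind> N) f = (\<integral>x. integral\<^sup>L (N x) f \<partial>M)"
proof -
  define p where "p y = max (f y) 0" for y
  define q where "q y = max (- f y) 0" for y
  have pm[measurable]: "p \<in> borel_measurable K" unfolding p_def by measurable
  have qm[measurable]: "q \<in> borel_measurable K" unfolding q_def by measurable
  have fpq: "\<And>y. f y = p y - q y" by (auto simp: p_def q_def)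
  have ip: "integrable (M \<bind> N) p" unfolding p_def using int by auto
  have iq: "integrable (M \<bind> N) q" unfolding q_def using int by auto
  have ppos: "\<And>y. 0 \<le> p y" and qpos: "\<And>y. 0 \<le> q y" by (auto simp: p_def q_def)
  note P = integral_bind_nonneg[OF pm ppos N ne ip] and Q = integral_bind_nonneg[OF qm qpos N ne iq]
  have "integral\<^sup>L (M \<bind> N) f = integral\<^sup>L (M \<bind> N) p - integral\<^sup>L (M \<bind> N) q"
    unfolding fpq using ip iq by (simp add: integral_diff)
  also have "\<dots> = (\<integral>x. integral\<^sup>L (N x) p \<partial>M) - (\<integral>x. integral\<^sup>L (N x) q \<partial>M)"
    using P(2) Q(2) by simp
  also have "\<dots> = (\<integral>x. integral\<^sup>L (N x) p - integral\<^sup>L (N x) q \<partial>M)"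
    using P(1) Q(1) by (simp add: integral_diff)
  also have "\<dots> = (\<integral>x. integral\<^sup>L (N x) f \<partial>M)"
  proof (rule integral_cong_AE)
    show "(\<lambda>x. integral\<^sup>L (N x) p - integral\<^sup>L (N x) q) \<in> borel_measurable M"
      using P(1) Q(1) by (intro borel_measurable_diff borel_measurable_integrable)
    show "(\<lambda>x. integral\<^sup>L (N x) f) \<in> borel_measurable M"
      by measurable
    show "AE x in M. integral\<^sup>L (N x) p - integral\<^sup>L (N x) q = integral\<^sup>L (N x) f"
      using P(3) Q(3) by eventually_elim (simp add: fpq[abs_def] integral_diff)
  qed
  finally show ?thesis .
qed

lemma second_moment:
  fixes M :: "'a::euclidean_space measure"
  assumes P: "prob_space M" and i1: "integrable M (\<lambda>y. y)" and m: "integral\<^sup>L M (\<lambda>y. y) = m"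
    and i2: "integrable M (\<lambda>y. (norm (y - m))\<^sup>2)"
  shows "integrable M (\<lambda>y. (norm y)\<^sup>2)"
    and "integral\<^sup>L M (\<lambda>y. (norm y)\<^sup>2) = (norm m)\<^sup>2 + (\<integral>y. (norm (y - m))\<^sup>2 \<partial>M)"
proof -
  interpret prob_space M by (rule P)
  have eq: "\<And>y. (norm y)\<^sup>2 = (norm (y - m))\<^sup>2 + 2 * (y \<bullet> m) - (norm m)\<^sup>2"
    by (simp add: power2_norm_eq_inner inner_diff_left inner_diff_right inner_commute algebra_simps)
  have eqf: "(\<lambda>y. (norm y)\<^sup>2) = (\<lambda>y. (norm (y - m))\<^sup>2 + 2 * (y \<bullet> m) - (norm m)\<^sup>2)"
    by (rule ext) (rule eq)
  have i3: "integrable M (\<lambda>y. y \<bullet> m)" using i1 by auto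
  show "integrable M (\<lambda>y. (norm y)\<^sup>2)"
    unfolding eqf using i2 i3 by auto
  have ip: "(\<integral>y. y \<bullet> m \<partial>M) = m \<bullet> m" using i1 m by simp
  have "integral\<^sup>L M (\<lambda>y. (norm y)\<^sup>2) = (\<integral>y. (norm (y - m))\<^sup>2 \<partial>M) + 2 * (\<integral>y. y \<bullet> m \<partial>M) - (norm m)\<^sup>2"
    unfolding eqf using i2 i3 by (simp add: integral_diff integral_add prob_space.prob_space[OF P])
  then show "integral\<^sup>L M (\<lambda>y. (norm y)\<^sup>2) = (norm m)\<^sup>2 + (\<integral>y. (norm (y - m))\<^sup>2 \<partial>M)"
    unfolding ip by (simp add: power2_norm_eq_inner)
qed

lemma bind_moments:
  fixes g :: "'a::euclidean_space measure" and C :: "'a \<Rightarrow> 'a measure"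
  assumes Pg: "prob_space g" and sg: "sets g = sets borel"
    and i1: "integrable g (\<lambda>x. x)" and m: "integral\<^sup>L g (\<lambda>x. x) = G"
    and i2: "integrable g (\<lambda>x. (norm (x - G))\<^sup>2)" and s: "(\<integral>x. (norm (x - G))\<^sup>2 \<partial>g) \<le> s"
    and C: "unbiased_compressor C \<omega>" and \<omega>: "\<omega> \<ge> 0"
  shows "prob_space (g \<bind> C)" "sets (g \<bind> C) = sets borel"
    "integrable (g \<bind> C) (\<lambda>y. (norm y)\<^sup>2)"
    "(\<integral>y. (norm y)\<^sup>2 \<partial>(g \<bind> C)) \<le> (1 + \<omega>) * ((norm G)\<^sup>2 + s)"
    "\<And>e. integrable (g \<bind> C) (\<lambda>y. y \<bullet> e)"
    "\<And>e. (\<integral>y. y \<bullet> e \<partial>(g \<bind> C)) = G \<bullet> e"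
proof -
  interpret g: prob_space g by (rule Pg)
  have Cm: "C \<in> borel \<rightarrow>\<^sub>M prob_algebra borel" and Cx: "\<And>x. integrable (C x) (\<lambda>y. y) \<and> integral\<^sup>L (C x) (\<lambda>y. y) = x \<and>
          integrable (C x) (\<lambda>y. (norm (y - x))\<^sup>2) \<and>
          (\<integral>y. (norm (y - x))\<^sup>2 \<partial>C x) \<le> \<omega> * (norm x)\<^sup>2"
    using C unfolding unbiased_compressor_def by auto
  have Cpa: "C x \<in> space (prob_algebra borel)" for x
    using measurable_space[OF Cm, of x] by simp
  have PC: "prob_space (C x)" and sC: "sets (C x) = sets borel" for x
    using Cpa[of x] by (auto simp: space_prob_algebra)
  have Cg: "C \<in> g \<rightarrow>\<^sub>M prob_algebra borel"
    using Cm by (simp add: measurable_cong_sets[OF sg refl])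
  have Cgs[measurable]: "C \<in> g \<rightarrow>\<^sub>M subprob_algebra borel" using Cg by (rule measurable_prob_algebraD)
  have gpa: "g \<in> space (prob_algebra g)" using Pg by (simp add: space_prob_algebra)
  show PB: "prob_space (g \<bind> C)" by (rule prob_space_bind'[OF gpa Cg])
  show sB: "sets (g \<bind> C) = sets borel" by (rule sets_bind'[OF gpa Cg])
  have ne: "space g \<noteq> {}" by (rule g.not_empty)
  have mB: "\<And>f::'a \<Rightarrow> real. f \<in> borel_measurable borel \<Longrightarrow> f \<in> borel_measurable (g \<bind> C)"
    by (simp add: measurable_cong_sets[OF sB refl])
  have mBv: "(\<lambda>y. y) \<in> borel_measurable (g \<bind> C)"
    by (simp add: measurable_cong_sets[OF sB refl])
  note sm = second_moment[OF PC conjunct1[OF Cx] conjunct1[OF conjunct2[OF Cx]] conjunct1[OF conjunct2[OF conjunct2[OF Cx]]]]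
  have inner: "(\<integral>\<^sup>+y. ennreal ((norm y)\<^sup>2) \<partial>C x) \<le> ennreal ((1 + \<omega>) * (norm x)\<^sup>2)" for x
  proof -
    have "(\<integral>\<^sup>+y. ennreal ((norm y)\<^sup>2) \<partial>C x) = ennreal (\<integral>y. (norm y)\<^sup>2 \<partial>C x)"
      using sm(1)[of x] by (intro nn_integral_eq_integral) auto
    also have "\<dots> \<le> ennreal ((1 + \<omega>) * (norm x)\<^sup>2)"
      using sm(2)[of x] Cx[of x] by (intro ennreal_leI) (simp add: algebra_simps)
    finally show ?thesis .
  qed
  have s0: "0 \<le> s" using order_trans[OF Bochner_Integration.integral_nonneg s] by auto
  note smg = second_moment[OF Pg i1 m i2]
  have "(\<integral>\<^sup>+y. ennreal ((norm y)\<^sup>2) \<partial>(g \<bind> C)) = (\<integral>\<^sup>+x. \<integral>\<^sup>+y. ennreal ((norm y)\<^sup>2) \<partial>C x \<partial>g)"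
    by (rule nn_integral_bind[OF _ Cgs]) measurable
  also have "\<dots> \<le> (\<integral>\<^sup>+x. ennreal ((1 + \<omega>) * (norm x)\<^sup>2) \<partial>g)"
    by (intro nn_integral_mono inner)
  also have "\<dots> = ennreal ((1 + \<omega>) * (\<integral>x. (norm x)\<^sup>2 \<partial>g))"
    using smg(1) \<omega> by (subst nn_integral_eq_integral) auto
  also have "\<dots> \<le> ennreal ((1 + \<omega>) * ((norm G)\<^sup>2 + s))"
    using smg(2) s \<omega> by (intro ennreal_leI mult_left_mono) auto
  finally have nnB: "(\<integral>\<^sup>+y. ennreal ((norm y)\<^sup>2) \<partial>(g \<bind> C)) \<le> ennreal ((1 + \<omega>) * ((norm G)\<^sup>2 + s))" .
  show iB: "integrable (g \<bind> C) (\<lambda>y. (norm y)\<^sup>2)"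
  proof (rule integrableI_nonneg)
    show "(\<lambda>y. (norm y)\<^sup>2) \<in> borel_measurable (g \<bind> C)" by (rule mB) simp
    show "AE y in g \<bind> C. 0 \<le> (norm y)\<^sup>2" by simp
    show "(\<integral>\<^sup>+y. ennreal ((norm y)\<^sup>2) \<partial>(g \<bind> C)) < \<infinity>"
      using order.strict_trans1[OF nnB ennreal_less_top] by (simp add: infinity_ennreal_def)
  qed
  show "(\<integral>y. (norm y)\<^sup>2 \<partial>(g \<bind> C)) \<le> (1 + \<omega>) * ((norm G)\<^sup>2 + s)"
  proof -
    have "(\<integral>y. (norm y)\<^sup>2 \<partial>(g \<bind> C)) = enn2real (\<integral>\<^sup>+y. ennreal ((norm y)\<^sup>2) \<partial>(g \<bind> C))"
      by (intro integral_eq_nn_integral mB) auto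
    also have "\<dots> \<le> (1 + \<omega>) * ((norm G)\<^sup>2 + s)"
      using nnB \<omega> s0 by (intro enn2real_leI) auto
    finally show ?thesis .
  qed
  have iid: "integrable (g \<bind> C) (\<lambda>y. y)"
  proof (rule Bochner_Integration.integrable_bound[OF _ mBv])
    show "integrable (g \<bind> C) (\<lambda>y. 1 + (norm y)\<^sup>2)"
      using iB prob_space.finite_measure[OF PB] by (intro Bochner_Integration.integrable_add finite_measure.integrable_const)
    show "AE y in g \<bind> C. norm y \<le> norm (1 + (norm y)\<^sup>2)"
    proof (intro AE_I2)
      fix y :: 'a
      have "norm y \<le> 1 + (norm y)\<^sup>2"
        using sum_squares_ge_zero[of "norm y - 1/2" 0] by (simp add: power2_eq_square algebra_simps)
      then show "norm y \<le> norm (1 + (norm y)\<^sup>2)" by simp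
    qed
  qed
  show "integrable (g \<bind> C) (\<lambda>y. y \<bullet> e)" for e using iid by auto
  show "(\<integral>y. y \<bullet> e \<partial>(g \<bind> C)) = G \<bullet> e" for e
  proof -
    have "(\<integral>y. y \<bullet> e \<partial>(g \<bind> C)) = (\<integral>x. (\<integral>y. y \<bullet> e \<partial>C x) \<partial>g)"
      by (rule integral_bind_real[OF _ Cgs ne]) (simp, rule integrable_inner_left[OF iid])
    also have "\<dots> = (\<integral>x. x \<bullet> e \<partial>g)"
    proof (rule Bochner_Integration.integral_cong[OF refl])
      fix x show "(\<integral>y. y \<bullet> e \<partial>C x) = x \<bullet> e"
        using Cx[of x] by (simp only: integral_inner_left)
    qed
    also have "\<dots> = G \<bullet> e" using i1 m by simp
    finally show ?thesis .
  qed
qed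


lemma prod_single:
  fixes h :: "nat \<Rightarrow> real"
  assumes "finite I" "i \<in> I" "\<And>l. l \<in> I \<Longrightarrow> l \<noteq> i \<Longrightarrow> h l = 1"
  shows "prod h I = h i"
proof -
  have "prod h I = prod h {i}"
    using assms by (intro prod.mono_neutral_right) auto
  then show ?thesis by simp
qed

lemma prod_two:
  fixes h :: "nat \<Rightarrow> real"
  assumes "finite I" "i \<in> I" "j \<in> I" "i \<noteq> j" "\<And>l. l \<in> I \<Longrightarrow> l \<noteq> i \<Longrightarrow> l \<noteq> j \<Longrightarrow> h l = 1"
  shows "prod h I = h i * h j"
proof -
  have "prod h I = prod h {i, j}"
    using assms by (intro prod.mono_neutral_right) auto
  then show ?thesis using assms by simp
qed

lemma product_second_moment:
  fixes M :: "nat \<Rightarrow> 'a::euclidean_space measure"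
  assumes Pr: "\<And>i. prob_space (M i)" and S: "\<And>i. sets (M i) = sets borel"
    and i2: "\<And>i. i < N \<Longrightarrow> integrable (M i) (\<lambda>y. (norm y)\<^sup>2)"
    and A: "\<And>i. i < N \<Longrightarrow> (\<integral>y. (norm y)\<^sup>2 \<partial>M i) \<le> A"
    and i1: "\<And>i e. i < N \<Longrightarrow> integrable (M i) (\<lambda>y. y \<bullet> e)"
    and m: "\<And>i e. i < N \<Longrightarrow> (\<integral>y. y \<bullet> e \<partial>M i) = G \<bullet> e"
  shows "integrable (Pi\<^sub>M {..<N} M) (\<lambda>ys. (norm (\<Sum>i<N. ys i))\<^sup>2)"
    and "(\<integral>ys. (norm (\<Sum>i<N. ys i))\<^sup>2 \<partial>Pi\<^sub>M {..<N} M) \<le> real N * A + real N * (real N - 1) * (norm G)\<^sup>2"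
proof -
  interpret product_prob_space M
    by (simp add: product_prob_space_def product_prob_space_axioms_def product_sigma_finite_def
        prob_space_imp_sigma_finite Pr)
  let ?P = "Pi\<^sub>M {..<N} M"
  have c1: "\<And>i. integrable (M i) (\<lambda>_. 1::real)"
    by (rule finite_measure.integrable_const[OF prob_space.finite_measure[OF Pr]])
  have int1: "\<And>l. integral\<^sup>L (M l) (\<lambda>_. 1::real) = 1"
    using Pr by (simp add: prob_space.prob_space)
  have diag: "integrable ?P (\<lambda>ys. ys i \<bullet> ys j) \<and> (\<integral>ys. ys i \<bullet> ys j \<partial>?P) = (\<integral>y. (norm y)\<^sup>2 \<partial>M i)"
    if "i < N" "j = i" for i j
  proof -
    define f where "f l y = (if l = i then (norm y)\<^sup>2 else 1)" for l and y :: 'a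
    have fi: "\<And>l. l \<in> {..<N} \<Longrightarrow> integrable (M l) (f l)"
      unfolding f_def using i2 c1 by (case_tac "l = i") (auto simp: that)
    have pe: "\<And>ys. (\<Prod>l\<in>{..<N}. f l (ys l)) = ys i \<bullet> ys j"
      using that by (subst prod_single[of _ i]) (auto simp: f_def power2_norm_eq_inner)
    have pe2: "(\<Prod>l\<in>{..<N}. integral\<^sup>L (M l) (f l)) = (\<integral>y. (norm y)\<^sup>2 \<partial>M i)"
      using that by (subst prod_single[of _ i]) (auto simp: f_def[abs_def] int1 prob_space.prob_space[OF Pr])
    show ?thesis
      proof -
      have a: "integrable ?P (\<lambda>x. \<Prod>l\<in>{..<N}. f l (x l))"
        by (rule product_integrable_prod) (auto intro: fi)
      have b: "(\<integral>x. (\<Prod>l\<in>{..<N}. f l (x l)) \<partial>?P) = (\<Prod>l\<in>{..<N}. integral\<^sup>L (M l) (f l))"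
        by (rule product_integral_prod) (auto intro: fi)
      show ?thesis using a b unfolding pe pe2 by simp
    qed
  qed
  have off: "integrable ?P (\<lambda>ys. ys i \<bullet> ys j) \<and> (\<integral>ys. ys i \<bullet> ys j \<partial>?P) = (norm G)\<^sup>2"
    if "i < N" "j < N" "i \<noteq> j" for i j
  proof -
    have tm: "integrable ?P (\<lambda>ys. (ys i \<bullet> e) * (ys j \<bullet> e)) \<and> (\<integral>ys. (ys i \<bullet> e) * (ys j \<bullet> e) \<partial>?P) = (G \<bullet> e) * (G \<bullet> e)" for e
    proof -
      define f where "f l y = (if l = i \<or> l = j then y \<bullet> e else 1)" for l and y :: 'a
      have fi: "\<And>l. l \<in> {..<N} \<Longrightarrow> integrable (M l) (f l)"
        unfolding f_def using i1 c1 by (case_tac "l = i \<or> l = j") auto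
      have pe: "\<And>ys. (\<Prod>l\<in>{..<N}. f l (ys l)) = (ys i \<bullet> e) * (ys j \<bullet> e)"
        using that by (subst prod_two[of _ i j]) (auto simp: f_def)
      have pe2: "(\<Prod>l\<in>{..<N}. integral\<^sup>L (M l) (f l)) = (G \<bullet> e) * (G \<bullet> e)"
        using that by (subst prod_two[of _ i j]) (auto simp: f_def[abs_def] int1 prob_space.prob_space[OF Pr] m)
      show ?thesis
        proof -
      have a: "integrable ?P (\<lambda>x. \<Prod>l\<in>{..<N}. f l (x l))"
        by (rule product_integrable_prod) (auto intro: fi)
      have b: "(\<integral>x. (\<Prod>l\<in>{..<N}. f l (x l)) \<partial>?P) = (\<Prod>l\<in>{..<N}. integral\<^sup>L (M l) (f l))"
        by (rule product_integral_prod) (auto intro: fi)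
      show ?thesis using a b unfolding pe pe2 by simp
    qed
    qed
    have eq: "\<And>ys. ys i \<bullet> ys j = (\<Sum>e\<in>Basis. (ys i \<bullet> e) * (ys j \<bullet> e))"
      by (rule euclidean_inner)
    show ?thesis
      unfolding eq using tm
      by (simp add: euclidean_inner[of G G, symmetric] power2_norm_eq_inner)
  qed
  define c where "c i j = (\<integral>ys. ys i \<bullet> ys j \<partial>?P)" for i j
  have ij: "integrable ?P (\<lambda>ys. ys i \<bullet> ys j)" if "i < N" "j < N" for i j
    using diag off that by (cases "i = j") auto
  have nsq: "\<And>ys. (norm (\<Sum>i<N. ys i))\<^sup>2 = (\<Sum>i<N. \<Sum>j<N. ys i \<bullet> ys j)"
    by (simp only: power2_norm_eq_inner inner_sum_left) (simp only: inner_sum_right)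
  show "integrable ?P (\<lambda>ys. (norm (\<Sum>i<N. ys i))\<^sup>2)"
    unfolding nsq using ij by (intro Bochner_Integration.integrable_sum) auto
  have ii: "integrable ?P (\<lambda>ys. \<Sum>j<N. ys i \<bullet> ys j)" if "i < N" for i
    using ij that by (intro Bochner_Integration.integrable_sum) auto
  have "(\<integral>ys. (norm (\<Sum>i<N. ys i))\<^sup>2 \<partial>?P) = (\<Sum>i<N. (\<integral>ys. (\<Sum>j<N. ys i \<bullet> ys j) \<partial>?P))"
    unfolding nsq by (rule Bochner_Integration.integral_sum) (use ii in auto)
  also have "\<dots> = (\<Sum>i<N. \<Sum>j<N. c i j)"
  proof (rule sum.cong[OF refl])
    fix i assume "i \<in> {..<N}"
    then show "(\<integral>ys. (\<Sum>j<N. ys i \<bullet> ys j) \<partial>?P) = (\<Sum>j<N. c i j)"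
      unfolding c_def by (intro Bochner_Integration.integral_sum) (use ij in auto)
  qed
  also have "\<dots> \<le> (\<Sum>i<N. A + (real N - 1) * (norm G)\<^sup>2)"
  proof (rule sum_mono)
    fix i assume i: "i \<in> {..<N}"
    have "(\<Sum>j<N. c i j) = c i i + (\<Sum>j\<in>{..<N} - {i}. c i j)"
      using i by (simp add: sum.remove)
    also have "(\<Sum>j\<in>{..<N} - {i}. c i j) = (\<Sum>j\<in>{..<N} - {i}. (norm G)\<^sup>2)"
      using off i by (intro sum.cong) (auto simp: c_def)
    also have "\<dots> = (real N - 1) * (norm G)\<^sup>2"
      using i by (simp add: of_nat_diff)
    also have "c i i \<le> A" using diag[of i i] A[of i] i by (simp add: c_def)
    finally show "(\<Sum>j<N. c i j) \<le> A + (real N - 1) * (norm G)\<^sup>2" by simp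
  qed
  also have "\<dots> = real N * A + real N * (real N - 1) * (norm G)\<^sup>2"
    by (simp add: algebra_simps)
  finally show "(\<integral>ys. (norm (\<Sum>i<N. ys i))\<^sup>2 \<partial>?P) \<le> real N * A + real N * (real N - 1) * (norm G)\<^sup>2" .
qed


theorem mainTheorem6:
  fixes F :: "'a::euclidean_space \<Rightarrow> real"
    and gradF :: "'a \<Rightarrow> 'a"
    and H :: "'a \<Rightarrow> 'a \<Rightarrow>\<^sub>L 'a"
    and g :: "nat \<Rightarrow> nat \<Rightarrow> 'a \<Rightarrow> 'a measure"
    and Cup Cdwn :: "'a \<Rightarrow> 'a measure"
    and N b :: nat
    and \<gamma> L \<sigma> \<omega>up \<omega>dwn :: real
  assumes N: "N \<ge> 1"
    and b: "b \<ge> 1"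
    and A1_up: "\<omega>up > 0" "unbiased_compressor Cup \<omega>up"
    and A1_dwn: "\<omega>dwn > 0" "unbiased_compressor Cdwn \<omega>dwn"
    and A2_grad: "\<And>w. (F has_derivative (\<lambda>h. gradF w \<bullet> h)) (at w)"
    and A2_hess: "\<And>w. (gradF has_derivative blinfun_apply (H w)) (at w)"
    and A2_cont: "continuous_on UNIV H"
    and A2_smooth: "\<And>x y. norm (gradF x - gradF y) \<le> L * norm (x - y)"
    and oracle_law: "\<And>k i w. i < N \<Longrightarrow> prob_space (g k i w) \<and> sets (g k i w) = sets borel"
    and oracle_unbiased: "\<And>k i w. i < N \<Longrightarrow>
          integrable (g k i w) (\<lambda>x. x) \<and> integral\<^sup>L (g k i w) (\<lambda>x. x) = gradF w"
    and A4: "\<And>k i w. i < N \<Longrightarrow>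
          integrable (g k i w) (\<lambda>x. (norm (x - gradF w))\<^sup>2) \<and>
          (\<integral>x. (norm (x - gradF w))\<^sup>2 \<partial>g k i w) \<le> \<sigma>\<^sup>2 / real b"
  shows "\<forall>k\<ge>1. \<forall>w.
     ghost_cond_err \<gamma> N g Cup Cdwn k w
       \<le> \<gamma>\<^sup>2 * \<omega>dwn * (1 + \<omega>up / real N) * (norm (gradF w))\<^sup>2
         + \<gamma>\<^sup>2 * \<omega>dwn * (1 + \<omega>up) * \<sigma>\<^sup>2 / (real N * real b)"
proof (intro allI impI)
  fix k w
  define G where "G = gradF w"
  define A where "A = (1 + \<omega>up) * ((norm G)\<^sup>2 + \<sigma>\<^sup>2 / real b)"
  define Mi where "Mi i = (if i < N then g k i w \<bind> Cup else return borel 0)" for i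
  define P where "P = Pi\<^sub>M {..<N} Mi"
  have ul: "uplink_law N g Cup k w = P"
    unfolding uplink_law_def P_def by (rule PiM_cong) (auto simp: Mi_def)
  note BM = bind_moments[OF conjunct1[OF oracle_law] conjunct2[OF oracle_law]
      conjunct1[OF oracle_unbiased] conjunct2[OF oracle_unbiased]
      conjunct1[OF A4] conjunct2[OF A4] A1_up(2) less_imp_le[OF A1_up(1)]]
  have PMi: "prob_space (Mi i)" for i
    using BM(1)[of i k w] by (auto simp: Mi_def prob_space_return)
  have SMi: "sets (Mi i) = sets borel" for i
    using BM(2)[of i k w] by (auto simp: Mi_def)
  have i2: "\<And>i. i < N \<Longrightarrow> integrable (Mi i) (\<lambda>y. (norm y)\<^sup>2)"
    using BM(3) by (simp add: Mi_def)
  have iA: "\<And>i. i < N \<Longrightarrow> (\<integral>y. (norm y)\<^sup>2 \<partial>Mi i) \<le> A"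
    using BM(4) by (simp add: Mi_def A_def G_def)
  have i1: "\<And>i e. i < N \<Longrightarrow> integrable (Mi i) (\<lambda>y. y \<bullet> e)"
    using BM(5) by (simp add: Mi_def)
  have im: "\<And>i e. i < N \<Longrightarrow> (\<integral>y. y \<bullet> e \<partial>Mi i) = G \<bullet> e"
    using BM(6) by (simp add: Mi_def G_def)
  note PSM = product_second_moment[OF PMi SMi i2 iA i1 im]
  have Npos: "real N > 0" using N by simp
  have bpos: "real b > 0" using b by simp
  define h where "h ys = (\<integral>z. (norm (\<gamma> *\<^sub>R (z - avg N ys)))\<^sup>2 \<partial>Cdwn (avg N ys))" for ys
  have Cd: "\<And>x. integrable (Cdwn x) (\<lambda>y. y) \<and> integral\<^sup>L (Cdwn x) (\<lambda>y. y) = x \<and>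
          integrable (Cdwn x) (\<lambda>y. (norm (y - x))\<^sup>2) \<and>
          (\<integral>y. (norm (y - x))\<^sup>2 \<partial>Cdwn x) \<le> \<omega>dwn * (norm x)\<^sup>2"
    using A1_dwn(2) unfolding unbiased_compressor_def by auto
  have avgn: "(norm (avg N ys))\<^sup>2 = (1 / real N)\<^sup>2 * (norm (\<Sum>i<N. ys i))\<^sup>2" for ys
    by (simp add: avg_def power_mult_distrib power_divide)
  have hle: "h ys \<le> \<gamma>\<^sup>2 * \<omega>dwn * (1 / real N)\<^sup>2 * (norm (\<Sum>i<N. ys i))\<^sup>2" for ys
  proof -
    have "h ys = \<gamma>\<^sup>2 * (\<integral>z. (norm (z - avg N ys))\<^sup>2 \<partial>Cdwn (avg N ys))"
      unfolding h_def by (simp add: power_mult_distrib)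
    also have "\<dots> \<le> \<gamma>\<^sup>2 * (\<omega>dwn * (norm (avg N ys))\<^sup>2)"
      using Cd[of "avg N ys"] by (intro mult_left_mono) auto
    finally show ?thesis by (simp add: avgn algebra_simps)
  qed
  have h0: "0 \<le> h ys" for ys
    unfolding h_def by (rule Bochner_Integration.integral_nonneg) simp
  have rhs0: "0 \<le> \<gamma>\<^sup>2 * \<omega>dwn * (1 + \<omega>up / real N) * (norm (gradF w))\<^sup>2
         + \<gamma>\<^sup>2 * \<omega>dwn * (1 + \<omega>up) * \<sigma>\<^sup>2 / (real N * real b)"
    using A1_up(1) A1_dwn(1) Npos bpos by (intro add_nonneg_nonneg) (auto intro!: mult_nonneg_nonneg divide_nonneg_nonneg)
  have "ghost_cond_err \<gamma> N g Cup Cdwn k w = integral\<^sup>L P h"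
    unfolding ghost_cond_err_def ul h_def ..
  also have "\<dots> \<le> \<gamma>\<^sup>2 * \<omega>dwn * (1 + \<omega>up / real N) * (norm (gradF w))\<^sup>2
         + \<gamma>\<^sup>2 * \<omega>dwn * (1 + \<omega>up) * \<sigma>\<^sup>2 / (real N * real b)"
  proof (cases "integrable P h")
    case False
    then show ?thesis using rhs0 by (simp add: not_integrable_integral_eq)
  next
    case True
    have "integral\<^sup>L P h \<le> (\<integral>ys. \<gamma>\<^sup>2 * \<omega>dwn * (1 / real N)\<^sup>2 * (norm (\<Sum>i<N. ys i))\<^sup>2 \<partial>P)"
      using True PSM(1) hle unfolding P_def by (intro integral_mono) auto
    also have "\<dots> = \<gamma>\<^sup>2 * \<omega>dwn * (1 / real N)\<^sup>2 * (\<integral>ys. (norm (\<Sum>i<N. ys i))\<^sup>2 \<partial>P)"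
      by simp
    also have "\<dots> \<le> \<gamma>\<^sup>2 * \<omega>dwn * (1 / real N)\<^sup>2 * (real N * A + real N * (real N - 1) * (norm G)\<^sup>2)"
      using PSM(2) A1_dwn(1) unfolding P_def by (intro mult_left_mono) auto
    also have "\<dots> = \<gamma>\<^sup>2 * \<omega>dwn * (1 + \<omega>up / real N) * (norm (gradF w))\<^sup>2
         + \<gamma>\<^sup>2 * \<omega>dwn * (1 + \<omega>up) * \<sigma>\<^sup>2 / (real N * real b)"
      using Npos bpos unfolding A_def G_def by (simp add: field_simps power2_eq_square)
    finally show ?thesis .
  qed
  finally show "ghost_cond_err \<gamma> N g Cup Cdwn k w
       \<le> \<gamma>\<^sup>2 * \<omega>dwn * (1 + \<omega>up / real N) * (norm (gradF w))\<^sup>2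
         + \<gamma>\<^sup>2 * \<omega>dwn * (1 + \<omega>up) * \<sigma>\<^sup>2 / (real N * real b)" .
qed

end
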